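(* Let $\rho>0$, $\mu>0$, and let $\gamma$ be a critical curve of $\mathbf{\Theta}_\mu$ in $\mathbb S^2(\rho)=\{x_1^2+x_2^2+x_3^2=1/\rho\}\subset\mathbb R^3$ with non-constant curvature $\kappa$ and with constant $d>0$ in the first integral $\mu^4\kappa_s^2=d\,e^{-2\mu\kappa}-(\mu\kappa-1)^2-\rho\mu^2$, positioned (after a rigid motion) as $\gamma(s)=\Phi(\mu x(s),\psi(s))$ with $x=e^{\mu\kappa}$, where $$\Phi(u,v)=\frac{1}{\sqrt{\rho d}}\left(\sqrt\rho\,u,\ \sqrt{d-\rho u^2}\sin(\sqrt{\rho d}\,v),\ \sqrt{d-\rho u^2}\cos(\sqrt{\rho d}\,v)\right).$$ Then $\gamma$ passes through the pole of $\mathbb S^2(\rho)$ (the point where $\sqrt{d-\rho\mu^2x^2}=0$, namely $(1/\sqrt\rho,0,0)$) if and only if $d=\rho\mu^2e^2$ and $x_0\ge e$, where $x_0$ is the maximum value of $x=e^{\mu\kappa}$ on the connected component of the orbit $\{(x,y): \mu^2y^2+(\log x-1)^2x^2+\rho\mu^2x^2=d\}$ (with $y=x_s$) traced by $\gamma$.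
   Context: A critical curve of $\mathbf{\Theta}_\mu(\gamma)=\int_\gamma e^{\mu\kappa}ds$ is an arc-length parametrized curve whose signed curvature satisfies $\frac{d^2}{ds^2}(e^{\mu\kappa})+(\kappa^2-\kappa/\mu+\rho)e^{\mu\kappa}=0$. In the parametrization, $\psi(s)=\int_0^s \frac{x(t)(\log x(t)-1)}{d-\rho\mu^2x(t)^2}dt$, with the arc-length parameter chosen so that $x(0)=x_0$. *)

theory Defs
  imports "HOL-Analysis.Analysis"
begin

definition Phi :: "real \<Rightarrow> real \<Rightarrow> real \<Rightarrow> real \<Rightarrow> real \<times> real \<times> real" where
  "Phi \<rho> d u v =
     (sqrt \<rho> * u / sqrt (\<rho> * d),
      sqrt (d - \<rho> * u\<^sup>2) * sin (sqrt (\<rho> * d) * v) / sqrt (\<rho> * d),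
      sqrt (d - \<rho> * u\<^sup>2) * cos (sqrt (\<rho> * d) * v) / sqrt (\<rho> * d))"

definition pole :: "real \<Rightarrow> real \<times> real \<times> real" where
  "pole \<rho> = (1 / sqrt \<rho>, 0, 0)"

definition psi :: "real \<Rightarrow> real \<Rightarrow> real \<Rightarrow> (real \<Rightarrow> real) \<Rightarrow> real \<Rightarrow> real" where
  "psi \<rho> \<mu> d x s =
     (let g = (\<lambda>t. x t * (ln (x t) - 1) / (d - \<rho> * \<mu>\<^sup>2 * (x t)\<^sup>2))
      in if 0 \<le> s then integral {0..s} g else - integral {s..0} g)"

definition gamma_curve :: "real \<Rightarrow> real \<Rightarrow> real \<Rightarrow> (real \<Rightarrow> real) \<Rightarrow> real \<Rightarrow> real \<times> real \<times> real" where
  "gamma_curve \<rho> \<mu> d x s = Phi \<rho> d (\<mu> * x s) (psi \<rho> \<mu> d x s)"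

text \<open>The orbit {(x,y) : mu^2 y^2 + (log x - 1)^2 x^2 + rho mu^2 x^2 = d} (with x = e^(mu kappa) > 0).\<close>
definition orbit :: "real \<Rightarrow> real \<Rightarrow> real \<Rightarrow> (real \<times> real) set" where
  "orbit \<rho> \<mu> d = {(a, b). 0 < a \<and> \<mu>\<^sup>2 * b\<^sup>2 + (ln a - 1)\<^sup>2 * a\<^sup>2 + \<rho> * \<mu>\<^sup>2 * a\<^sup>2 = d}"

end

theory Submission
  imports Defs
begin

theorem proposition3p1:
  fixes \<rho> \<mu> d x0 :: real and \<kappa> \<kappa>1 x1 x2 :: "real \<Rightarrow> real"
  defines "x \<equiv> (\<lambda>s. exp (\<mu> * \<kappa> s))"
  assumes rho_pos: "\<rho> > 0" and mu_pos: "\<mu> > 0" and d_pos: "d > 0"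
    and kappa_deriv: "\<forall>s. (\<kappa> has_real_derivative \<kappa>1 s) (at s)"
    and x_deriv: "\<forall>s. (x has_real_derivative x1 s) (at s)"
    and x1_deriv: "\<forall>s. (x1 has_real_derivative x2 s) (at s)"
    and EL: "\<forall>s. x2 s + ((\<kappa> s)\<^sup>2 - \<kappa> s / \<mu> + \<rho>) * x s = 0"
    and nonconst: "\<not> (\<exists>c. \<forall>s. \<kappa> s = c)"
    and first_integral: "\<forall>s. \<mu>^4 * (\<kappa>1 s)\<^sup>2 = d * exp (- 2 * \<mu> * \<kappa> s) - (\<mu> * \<kappa> s - 1)\<^sup>2 - \<rho> * \<mu>\<^sup>2"
    and x0_max: "\<forall>p \<in> connected_component_set (orbit \<rho> \<mu> d) (x 0, x1 0). fst p \<le> x0"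
    and x_at_0: "x 0 = x0"
  shows "(\<exists>s. gamma_curve \<rho> \<mu> d x s = pole \<rho>) \<longleftrightarrow> (d = \<rho> * \<mu>\<^sup>2 * (exp 1)\<^sup>2 \<and> x0 \<ge> exp 1)"
proof -
  have xpos: "x s > 0" for s unfolding x_def by simp
  have lnx: "ln (x s) = \<mu> * \<kappa> s" for s unfolding x_def by simp
  have x1eq: "x1 s = x s * (\<mu> * \<kappa>1 s)" for s
  proof -
    have "(x has_real_derivative x s * (\<mu> * \<kappa>1 s)) (at s)"
      unfolding x_def
      by (rule DERIV_chain2[where f=exp, OF DERIV_exp]) (rule DERIV_cmult, rule kappa_deriv[rule_format])
    then show ?thesis using x_deriv DERIV_unique by blast
  qed
  have orb: "\<mu>\<^sup>2 * (x1 s)\<^sup>2 + (ln (x s) - 1)\<^sup>2 * (x s)\<^sup>2 + \<rho> * \<mu>\<^sup>2 * (x s)\<^sup>2 = d" for s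
  proof -
    have e: "exp (- 2 * \<mu> * \<kappa> s) * (x s)\<^sup>2 = 1"
      unfolding x_def by (simp add: power2_eq_square flip: exp_add)
    have "\<mu>\<^sup>2 * (x1 s)\<^sup>2 = (\<mu>^4 * (\<kappa>1 s)\<^sup>2) * (x s)\<^sup>2"
      by (simp add: x1eq power2_eq_square power4_eq_xxxx)
    also have "\<dots> = d * (exp (- 2 * \<mu> * \<kappa> s) * (x s)\<^sup>2) - (\<mu> * \<kappa> s - 1)\<^sup>2 * (x s)\<^sup>2 - \<rho> * \<mu>\<^sup>2 * (x s)\<^sup>2"
      by (subst first_integral[rule_format]) (simp add: algebra_simps)
    finally show ?thesis using e lnx by simp
  qed
  have inorb: "(x s, x1 s) \<in> orbit \<rho> \<mu> d" for s
    using orb[of s] xpos[of s] unfolding orbit_def by simp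
  have pole_iff: "gamma_curve \<rho> \<mu> d x s = pole \<rho> \<longleftrightarrow> \<rho> * \<mu>\<^sup>2 * (x s)\<^sup>2 = d" for s
  proof
    assume "gamma_curve \<rho> \<mu> d x s = pole \<rho>"
    then have "sqrt \<rho> * (\<mu> * x s) / sqrt (\<rho> * d) = 1 / sqrt \<rho>"
      unfolding gamma_curve_def Phi_def pole_def by simp
    then have "\<mu> * x s * sqrt \<rho> = sqrt d"
      using rho_pos d_pos by (auto simp: real_sqrt_mult field_simps)
    then have "(\<mu> * x s * sqrt \<rho>)\<^sup>2 = (sqrt d)\<^sup>2" by simp
    then show "\<rho> * \<mu>\<^sup>2 * (x s)\<^sup>2 = d" using rho_pos d_pos by (simp add: power_mult_distrib algebra_simps)
  next
    assume h: "\<rho> * \<mu>\<^sup>2 * (x s)\<^sup>2 = d"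
    have z: "d - \<rho> * (\<mu> * x s)\<^sup>2 = 0" using h by (simp add: power_mult_distrib)
    have "sqrt (\<rho> * d) = \<rho> * \<mu> * x s"
    proof -
      have "\<rho> * d = (\<rho> * \<mu> * x s)\<^sup>2" using h by (simp add: power_mult_distrib power2_eq_square algebra_simps)
      then show ?thesis using rho_pos mu_pos xpos[of s] by simp
    qed
    moreover have "sqrt \<rho> * (\<mu> * x s) / (\<rho> * \<mu> * x s) = 1 / sqrt \<rho>"
      using rho_pos mu_pos xpos[of s]
      by (simp add: field_simps)
    ultimately show "gamma_curve \<rho> \<mu> d x s = pole \<rho>"
      unfolding gamma_curve_def Phi_def pole_def using z by simp
  qed
  show ?thesis
  proof
    assume "\<exists>s. gamma_curve \<rho> \<mu> d x s = pole \<rho>"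
    then obtain s where "\<rho> * \<mu>\<^sup>2 * (x s)\<^sup>2 = d" using pole_iff by blast
    with orb[of s] have "\<mu>\<^sup>2 * (x1 s)\<^sup>2 + (ln (x s) - 1)\<^sup>2 * (x s)\<^sup>2 = 0" by simp
    moreover have "\<mu>\<^sup>2 * (x1 s)\<^sup>2 \<ge> 0" "(ln (x s) - 1)\<^sup>2 * (x s)\<^sup>2 \<ge> 0" by simp_all
    ultimately have "(ln (x s) - 1)\<^sup>2 * (x s)\<^sup>2 = 0" by linarith
    then have "ln (x s) = 1" using xpos[of s] by simp
    then have xs: "x s = exp 1" using xpos[of s] by (metis exp_ln)
    have d: "d = \<rho> * \<mu>\<^sup>2 * (exp 1)\<^sup>2" using \<open>\<rho> * \<mu>\<^sup>2 * (x s)\<^sup>2 = d\<close> xs by simp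
    define T where "T = range (\<lambda>t. (x t, x1 t))"
    have cx: "continuous_on UNIV x"
      using x_deriv by (meson DERIV_isCont continuous_at_imp_continuous_on)
    have cx1: "continuous_on UNIV x1"
      using x1_deriv by (meson DERIV_isCont continuous_at_imp_continuous_on)
    have "connected T" unfolding T_def
      by (intro connected_continuous_image continuous_on_Pair cx cx1) simp
    moreover have "T \<subseteq> orbit \<rho> \<mu> d" unfolding T_def using inorb by auto
    moreover have "(x 0, x1 0) \<in> T" "(x s, x1 s) \<in> T" unfolding T_def by auto
    ultimately have "(x s, x1 s) \<in> connected_component_set (orbit \<rho> \<mu> d) (x 0, x1 0)"
      unfolding connected_component_def by blast
    then have "x s \<le> x0" using x0_max by fastforce
    with xs d show "d = \<rho> * \<mu>\<^sup>2 * (exp 1)\<^sup>2 \<and> x0 \<ge> exp 1" by simp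
  next
    assume h: "d = \<rho> * \<mu>\<^sup>2 * (exp 1)\<^sup>2 \<and> x0 \<ge> exp 1"
    have "\<rho> * \<mu>\<^sup>2 * (x 0)\<^sup>2 \<le> d" using orb[of 0]
      by (smt (verit) zero_le_power2 mult_nonneg_nonneg)
    then have "\<rho> * \<mu>\<^sup>2 * (x 0)\<^sup>2 \<le> \<rho> * \<mu>\<^sup>2 * (exp 1)\<^sup>2" using h by simp
    then have "(x 0)\<^sup>2 \<le> (exp 1)\<^sup>2" using rho_pos mu_pos by simp
    then have "x 0 \<le> exp 1" using xpos[of 0] by (simp add: power2_le_iff_abs_le)
    then have "x 0 = exp 1" using h x_at_0 by simp
    then have "\<rho> * \<mu>\<^sup>2 * (x 0)\<^sup>2 = d" using h by simp
    then show "\<exists>s. gamma_curve \<rho> \<mu> d x s = pole \<rho>" using pole_iff by blast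
  qed
qed

end
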